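(* Let $X$ be a systolic complex and let $D\geq 0$ be a constant such that for all good geodesics $(v_0,\dots,v_n)$ and $(w_0,\dots,w_m)$ in $X$ with $v_0=w_0$ and all $0\le c\le 1$ one has $d(v_{\lfloor cn\rfloor},w_{\lfloor cm\rfloor})\le c\cdot d(v_n,w_m)+D$ (such a universal constant exists by a result of Osajda–Przytycki). Let $\eta=(v_0,v_1,\dots)$ and $\xi=(w_0,w_1,\dots)$ be good geodesic rays in $X$ which are equivalent, i.e. there is $K\ge 0$ with $d(v_i,w_i)\le K$ for all $i\ge 0$. Then for every $i\ge 0$, $$d(v_i,w_i)\le d(v_0,w_0)+2D+1.$$
   Context: A simplicial complex is flag if every set of pairwise adjacent vertices spans a simplex; it is $6$-large if every embedded cycle of length $4$ or $5$ has a diagonal. A simplicial complex $X$ is systolic if it is simply connected and all vertex links are flag and $6$-large. $d$ denotes the combinatorial (edge-path) metric on the vertex set; a geodesic is a sequence of vertices $(v_i)$ with $d(v_i,v_j)=|i-j|$. Good geodesics are the subclass of geodesics in a systolic complex defined by Osajda and Przytycki ("Boundaries of systolic groups", Geom. Topol. 2009): any two vertices are joined by a good geodesic, subgeodesics of good geodesics are good, and simplicial automorphisms preserve good geodesics. A good geodesic ray is a geodesic ray all of whose finite subgeodesics are good geodesics. *)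

theory Defs
  imports Complex_Main
begin

definition simplicial_complex :: "'v set set \<Rightarrow> bool" where
  "simplicial_complex X \<longleftrightarrow>
     (\<forall>s\<in>X. finite s \<and> s \<noteq> {}) \<and>
     (\<forall>s\<in>X. \<forall>t. t \<subseteq> s \<and> t \<noteq> {} \<longrightarrow> t \<in> X)"

definition verts :: "'v set set \<Rightarrow> 'v set" where
  "verts X = \<Union>X"

definition adj :: "'v set set \<Rightarrow> 'v \<Rightarrow> 'v \<Rightarrow> bool" where
  "adj X u v \<longleftrightarrow> u \<noteq> v \<and> {u, v} \<in> X"

definition flag :: "'v set set \<Rightarrow> bool" where
  "flag X \<longleftrightarrow> (\<forall>S. finite S \<and> S \<noteq> {} \<and> S \<subseteq> verts X \<and>
      (\<forall>u\<in>S. \<forall>v\<in>S. u \<noteq> v \<longrightarrow> adj X u v) \<longrightarrow> S \<in> X)"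

definition embedded_cycle :: "'v set set \<Rightarrow> 'v list \<Rightarrow> bool" where
  "embedded_cycle X cs \<longleftrightarrow> length cs \<ge> 3 \<and> distinct cs \<and>
     (\<forall>i<length cs. adj X (cs ! i) (cs ! ((i + 1) mod length cs)))"

definition has_diagonal :: "'v set set \<Rightarrow> 'v list \<Rightarrow> bool" where
  "has_diagonal X cs \<longleftrightarrow> (\<exists>i<length cs. \<exists>j<length cs.
      j \<noteq> (i + 1) mod length cs \<and> i \<noteq> (j + 1) mod length cs \<and> i \<noteq> j \<and>
      adj X (cs ! i) (cs ! j))"

definition six_large :: "'v set set \<Rightarrow> bool" where
  "six_large X \<longleftrightarrow> flag X \<and>
     (\<forall>cs. embedded_cycle X cs \<and> length cs \<in> {4, 5} \<longrightarrow> has_diagonal X cs)"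

definition link :: "'v set set \<Rightarrow> 'v \<Rightarrow> 'v set set" where
  "link X v = {s \<in> X. v \<notin> s \<and> insert v s \<in> X}"

text \<open>Edge paths (consecutive vertices equal or adjacent), and the combinatorial
edge-path homotopy relation (Spanier).\<close>
definition edge_path :: "'v set set \<Rightarrow> 'v list \<Rightarrow> bool" where
  "edge_path X p \<longleftrightarrow> p \<noteq> [] \<and> set p \<subseteq> verts X \<and>
     (\<forall>i. i + 1 < length p \<longrightarrow> {p ! i, p ! (i + 1)} \<in> X)"

definition elem_move :: "'v set set \<Rightarrow> 'v list \<Rightarrow> 'v list \<Rightarrow> bool" where
  "elem_move X p q \<longleftrightarrow>
     (\<exists>xs ys a b c. p = xs @ [a, b, c] @ ys \<and> q = xs @ [a, c] @ ys \<and> {a, b, c} \<in> X) \<or>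
     (\<exists>xs ys a. p = xs @ [a, a] @ ys \<and> q = xs @ [a] @ ys)"

definition simply_connected :: "'v set set \<Rightarrow> bool" where
  "simply_connected X \<longleftrightarrow> verts X \<noteq> {} \<and>
     (\<forall>u\<in>verts X. \<forall>v\<in>verts X. \<exists>p. edge_path X p \<and> hd p = u \<and> last p = v) \<and>
     (\<forall>p. edge_path X p \<and> hd p = last p \<longrightarrow>
        (p, [hd p]) \<in> {(a, b). elem_move X a b \<or> elem_move X b a}\<^sup>*)"

definition systolic :: "'v set set \<Rightarrow> bool" where
  "systolic X \<longleftrightarrow> simplicial_complex X \<and> simply_connected X \<and>
     (\<forall>v\<in>verts X. flag (link X v) \<and> six_large (link X v))"

definition cdist :: "'v set set \<Rightarrow> 'v \<Rightarrow> 'v \<Rightarrow> nat" where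
  "cdist X u v = (LEAST n. \<exists>p. length p = n + 1 \<and> p \<noteq> [] \<and> hd p = u \<and> last p = v \<and>
       set p \<subseteq> verts X \<and> (\<forall>i. i + 1 < length p \<longrightarrow> adj X (p ! i) (p ! (i + 1))))"

definition geodesic :: "'v set set \<Rightarrow> 'v list \<Rightarrow> bool" where
  "geodesic X p \<longleftrightarrow> p \<noteq> [] \<and> set p \<subseteq> verts X \<and>
     (\<forall>i<length p. \<forall>j<length p. cdist X (p ! i) (p ! j) = (if i \<le> j then j - i else i - j))"

definition simplicial_automorphism :: "'v set set \<Rightarrow> ('v \<Rightarrow> 'v) \<Rightarrow> bool" where
  "simplicial_automorphism X f \<longleftrightarrow> bij_betw f (verts X) (verts X) \<and>
     (\<forall>s. s \<subseteq> verts X \<longrightarrow> (f ` s \<in> X \<longleftrightarrow> s \<in> X))"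

definition subpath :: "'v list \<Rightarrow> nat \<Rightarrow> nat \<Rightarrow> 'v list" where
  "subpath p i j = take (j + 1 - i) (drop i p)"

text \<open>The structural properties of the Osajda--Przytycki good geodesics that are
used: good geodesics are geodesics; any two vertices are joined by one; they are
closed under subgeodesics, reversal and simplicial automorphisms.\<close>
definition good_geodesic_system :: "'v set set \<Rightarrow> ('v list \<Rightarrow> bool) \<Rightarrow> bool" where
  "good_geodesic_system X G \<longleftrightarrow>
     (\<forall>p. G p \<longrightarrow> geodesic X p) \<and>
     (\<forall>u\<in>verts X. \<forall>v\<in>verts X. \<exists>p. G p \<and> hd p = u \<and> last p = v) \<and>
     (\<forall>p i j. G p \<and> i \<le> j \<and> j < length p \<longrightarrow> G (subpath p i j)) \<and>
     (\<forall>p. G p \<longrightarrow> G (rev p)) \<and>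
     (\<forall>p f. G p \<and> simplicial_automorphism X f \<longrightarrow> G (map f p))"

definition good_ray :: "'v set set \<Rightarrow> ('v list \<Rightarrow> bool) \<Rightarrow> (nat \<Rightarrow> 'v) \<Rightarrow> bool" where
  "good_ray X G v \<longleftrightarrow>
     (\<forall>i j. cdist X (v i) (v j) = (if i \<le> j then j - i else i - j)) \<and>
     (\<forall>i j. i \<le> j \<longrightarrow> G (map v [i..<Suc j]))"

end

theory Submission imports Defs begin

lemma cdist_alt: "cdist X u v = (LEAST n. \<exists>p. length p = n + 1 \<and> p \<noteq> [] \<and> hd p = u \<and> last p = v \<and>
       set p \<subseteq> verts X \<and> successively (adj X) p)"
  unfolding cdist_def successively_conv_nth by simp

lemma adj_sym: "adj X u v = adj X v u"
  unfolding adj_def by (auto simp: insert_commute)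

lemma cdist_sym: "cdist X u v = cdist X v u"
proof -
  have "(\<exists>p. length p = n + 1 \<and> p \<noteq> [] \<and> hd p = u \<and> last p = v \<and>
       set p \<subseteq> verts X \<and> successively (adj X) p) \<longleftrightarrow>
       (\<exists>p. length p = n + 1 \<and> p \<noteq> [] \<and> hd p = v \<and> last p = u \<and>
       set p \<subseteq> verts X \<and> successively (adj X) p)" for n u v
  proof
    assume "\<exists>p. length p = n + 1 \<and> p \<noteq> [] \<and> hd p = u \<and> last p = v \<and>
       set p \<subseteq> verts X \<and> successively (adj X) p"
    then obtain p where "length p = n + 1 \<and> p \<noteq> [] \<and> hd p = u \<and> last p = v \<and>
       set p \<subseteq> verts X \<and> successively (adj X) p" by blast
    then show "\<exists>p. length p = n + 1 \<and> p \<noteq> [] \<and> hd p = v \<and> last p = u \<and>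
       set p \<subseteq> verts X \<and> successively (adj X) p"
      by (intro exI[of _ "rev p"]) (auto simp: hd_rev last_rev adj_sym)
  next
    assume "\<exists>p. length p = n + 1 \<and> p \<noteq> [] \<and> hd p = v \<and> last p = u \<and>
       set p \<subseteq> verts X \<and> successively (adj X) p"
    then obtain p where "length p = n + 1 \<and> p \<noteq> [] \<and> hd p = v \<and> last p = u \<and>
       set p \<subseteq> verts X \<and> successively (adj X) p" by blast
    then show "\<exists>p. length p = n + 1 \<and> p \<noteq> [] \<and> hd p = u \<and> last p = v \<and>
       set p \<subseteq> verts X \<and> successively (adj X) p"
      by (intro exI[of _ "rev p"]) (auto simp: hd_rev last_rev adj_sym)
  qed
  then show ?thesis unfolding cdist_alt by simp
qed

definition apath where "apath X u v p \<longleftrightarrow> p \<noteq> [] \<and> hd p = u \<and> last p = v \<and>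
       set p \<subseteq> verts X \<and> successively (adj X) p"

lemma path_exists:
  assumes "systolic X" "u \<in> verts X" "v \<in> verts X"
  shows "\<exists>p. apath X u v p"
proof -
  from assms obtain p where p: "edge_path X p" "hd p = u" "last p = v"
    unfolding systolic_def simply_connected_def by blast
  have s1: "successively (\<lambda>a b. {a, b} \<in> X) p"
    using p(1) unfolding edge_path_def successively_conv_nth by simp
  let ?q = "remdups_adj p"
  have "successively (\<lambda>a b. {a, b} \<in> X) ?q" by (rule successively_remdups_adjI[OF s1])
  moreover have "distinct_adj ?q" by simp
  ultimately have "successively (adj X) ?q"
    unfolding distinct_adj_def successively_conv_nth adj_def by blast
  moreover have "?q \<noteq> []" using p(1) unfolding edge_path_def by simp
  moreover have "hd ?q = u" "last ?q = v" using p p(1) unfolding edge_path_def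
    by (auto simp: hd_remdups_adj last_remdups_adj)
  moreover have "set ?q \<subseteq> verts X" using p(1) unfolding edge_path_def by simp
  ultimately show ?thesis unfolding apath_def by blast
qed

lemma cdist_ex:
  assumes "apath X u v p"
  shows "\<exists>q. length q = cdist X u v + 1 \<and> apath X u v q"
proof -
  have "\<exists>q. length q = (length p - 1) + 1 \<and> q \<noteq> [] \<and> hd q = u \<and> last q = v \<and>
       set q \<subseteq> verts X \<and> successively (adj X) q"
    using assms unfolding apath_def by (intro exI[of _ p]) auto
  then have "\<exists>n q. length q = n + 1 \<and> q \<noteq> [] \<and> hd q = u \<and> last q = v \<and>
       set q \<subseteq> verts X \<and> successively (adj X) q" by blast
  from LeastI_ex[OF this] show ?thesis unfolding cdist_alt apath_def by blast
qed

lemma cdist_le: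
  assumes "apath X u v p"
  shows "cdist X u v \<le> length p - 1"
proof -
  have "\<exists>q. length q = (length p - 1) + 1 \<and> q \<noteq> [] \<and> hd q = u \<and> last q = v \<and>
       set q \<subseteq> verts X \<and> successively (adj X) q"
    using assms unfolding apath_def by (intro exI[of _ p]) auto
  then show ?thesis unfolding cdist_alt by (rule Least_le)
qed

lemma cdist_tri:
  assumes "systolic X" "u \<in> verts X" "v \<in> verts X" "w \<in> verts X"
  shows "cdist X u w \<le> cdist X u v + cdist X v w"
proof -
  obtain p0 where p0: "apath X u v p0" using path_exists[OF assms(1) assms(2) assms(3)] by blast
  obtain p where p: "length p = cdist X u v + 1" "apath X u v p" using cdist_ex[OF p0] by blast
  obtain q0 where q0: "apath X v w q0" using path_exists[OF assms(1) assms(3) assms(4)] by blast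
  obtain q where q: "length q = cdist X v w + 1" "apath X v w q" using cdist_ex[OF q0] by blast
  have "apath X u w (p @ tl q)"
  proof (cases "tl q = []")
    case True
    then show ?thesis using p(2) q(2) unfolding apath_def
      by (cases q) auto
  next
    case False
    obtain a r where qa: "q = a # r" using q(2) unfolding apath_def by (cases q) auto
    have "successively (adj X) r" using q(2) qa unfolding apath_def by (auto simp add: successively_Cons)
    moreover have "adj X (last p) (hd r)" using q(2) qa False p(2) unfolding apath_def by (auto simp add: successively_Cons)
    ultimately show ?thesis using p(2) q(2) qa False unfolding apath_def
      by (auto simp: successively_append_iff)
  qed
  from cdist_le[OF this] show ?thesis using p q by simp
qed


lemma floor_facts:
  fixes x :: real assumes "0 \<le> x"
  shows "real (nat \<lfloor>x\<rfloor>) \<le> x" "x < real (nat \<lfloor>x\<rfloor>) + 1"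
proof -
  have "\<lfloor>x\<rfloor> \<ge> 0" using assms by simp
  then have e: "real (nat \<lfloor>x\<rfloor>) = of_int \<lfloor>x\<rfloor>" by simp
  show "real (nat \<lfloor>x\<rfloor>) \<le> x" unfolding e by (rule of_int_floor_le)
  show "x < real (nat \<lfloor>x\<rfloor>) + 1" unfolding e by linarith
qed

theorem corollary2p9:
  fixes X :: "'v set set" and G :: "'v list \<Rightarrow> bool" and D :: real
    and v w :: "nat \<Rightarrow> 'v"
  assumes "systolic X"
    and "good_geodesic_system X G"
    and "D \<ge> 0"
    and "\<forall>p q (c::real). G p \<and> G q \<and> hd p = hd q \<and> 0 \<le> c \<and> c \<le> 1 \<longrightarrow>
           real (cdist X (p ! nat \<lfloor>c * real (length p - 1)\<rfloor>) (q ! nat \<lfloor>c * real (length q - 1)\<rfloor>))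
             \<le> c * real (cdist X (last p) (last q)) + D"
    and "good_ray X G v" and "good_ray X G w"
    and "\<exists>K::real. K \<ge> 0 \<and> (\<forall>i. real (cdist X (v i) (w i)) \<le> K)"
  shows "\<forall>i. real (cdist X (v i) (w i)) \<le> real (cdist X (v 0) (w 0)) + 2 * D + 1"
proof
  fix i
  obtain K :: real where K: "K \<ge> 0" "\<And>i. real (cdist X (v i) (w i)) \<le> K" using assms(7) by blast
  have sys1: "\<And>p. G p \<Longrightarrow> geodesic X p" and sys2: "\<And>u v. u\<in>verts X \<Longrightarrow> v\<in>verts X \<Longrightarrow> \<exists>p. G p \<and> hd p = u \<and> last p = v"
    and sys4: "\<And>p. G p \<Longrightarrow> G (rev p)"
    using assms(2) unfolding good_geodesic_system_def by blast+
  have Gv: "G (map v [0..<Suc n])" for n using assms(5) unfolding good_ray_def by blast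
  have Gw: "G (map w [0..<Suc n])" for n using assms(6) unfolding good_ray_def by blast
  have vv: "v k \<in> verts X" for k
  proof -
    have "G (map v [k..<Suc k])" using assms(5) unfolding good_ray_def by blast
    then have "geodesic X (map v [k..<Suc k])" by (rule sys1)
    then show ?thesis unfolding geodesic_def by auto
  qed
  have wv: "w k \<in> verts X" for k
  proof -
    have "G (map w [k..<Suc k])" using assms(6) unfolding good_ray_def by blast
    then have "geodesic X (map w [k..<Suc k])" by (rule sys1)
    then show ?thesis unfolding geodesic_def by auto
  qed
  define a where "a = cdist X (v 0) (w 0)"
  define B where "B = real a + 2 * D + 1"
  have claim: "real (cdist X (v i) (w i)) \<le> real i * K / real n + B" if n: "i \<le> n" "1 \<le> n" for n
  proof -
    define P where "P = map v [0..<Suc n]"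
    have GP: "G P" unfolding P_def by (rule Gv)
    obtain \<gamma> where g: "G \<gamma>" "hd \<gamma> = v 0" "last \<gamma> = w n" using sys2[OF vv wv] by blast
    have geo: "geodesic X \<gamma>" using g sys1 by blast
    define m where "m = length \<gamma> - 1"
    have gne: "\<gamma> \<noteq> []" using geo unfolding geodesic_def by simp
    have lg: "length \<gamma> = m + 1" using gne unfolding m_def by (cases \<gamma>) auto
    have gv: "\<gamma> ! k \<in> verts X" if "k \<le> m" for k
      using geo that lg unfolding geodesic_def by (auto simp: subset_iff)
    define c where "c = real i / real n"
    define c' where "c' = real (n - i) / real n"
    have c01: "0 \<le> c" "c \<le> 1" using n unfolding c_def by auto
    have c'01: "0 \<le> c'" "c' \<le> 1" using n unfolding c'_def by auto
    have cc: "c + c' = 1" using n unfolding c_def c'_def by (simp add: field_simps of_nat_diff)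
    have cn: "c * real n = real i" using n unfolding c_def by simp
    have c'n: "c' * real n = real (n - i)" using n unfolding c'_def by simp
    define j where "j = nat \<lfloor>c * real m\<rfloor>"
    define j' where "j' = nat \<lfloor>c' * real m\<rfloor>"
    have jb: "real j \<le> c * real m" "c * real m < real j + 1"
      unfolding j_def using floor_facts c01 by auto
    have j'b: "real j' \<le> c' * real m" "c' * real m < real j' + 1"
      unfolding j'_def using floor_facts c'01 by auto
    have cm: "c * real m + c' * real m = real m" using cc by (metis distrib_right mult_1)
    have "real j + real j' \<le> real m" using jb j'b cm by linarith
    then have s1: "j + j' \<le> m" by linarith
    have "real m < real j + real j' + 2" using jb j'b cm by linarith
    then have s2: "m \<le> j + j' + 1" by linarith
    have h1: "real (cdist X (v i) (\<gamma> ! j)) \<le> c * real (cdist X (v n) (w n)) + D"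
    proof -
      have hP: "hd P = hd \<gamma>" using g unfolding P_def by (simp add: hd_map upt_conv_Cons del: upt_Suc)
      have "real (cdist X (P ! nat \<lfloor>c * real (length P - 1)\<rfloor>) (\<gamma> ! nat \<lfloor>c * real (length \<gamma> - 1)\<rfloor>))
             \<le> c * real (cdist X (last P) (last \<gamma>)) + D"
        using assms(4)[rule_format, of P \<gamma> c] GP g c01 hP by blast
      moreover have "P ! nat \<lfloor>c * real (length P - 1)\<rfloor> = v i" using cn n unfolding P_def
        by (simp del: upt_Suc)
      moreover have "last P = v n" unfolding P_def by simp
      ultimately show ?thesis using g lg unfolding j_def by simp
    qed
    define Q where "Q = rev (map w [0..<Suc n])"
    have GQ: "G Q" unfolding Q_def using sys4 Gw by blast
    have Gg': "G (rev \<gamma>)" using sys4 g by blast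
    have h2: "real (cdist X (w i) (\<gamma> ! (m - j'))) \<le> c' * real (cdist X (w 0) (v 0)) + D"
    proof -
      have "hd Q = w n" unfolding Q_def by (simp add: hd_rev)
      moreover have "hd (rev \<gamma>) = w n" using g by (simp add: hd_rev)
      ultimately have hQ: "hd Q = hd (rev \<gamma>)" by simp
      have "real (cdist X (Q ! nat \<lfloor>c' * real (length Q - 1)\<rfloor>) (rev \<gamma> ! nat \<lfloor>c' * real (length (rev \<gamma>) - 1)\<rfloor>))
             \<le> c' * real (cdist X (last Q) (last (rev \<gamma>))) + D"
        using assms(4)[rule_format, of Q "rev \<gamma>" c'] GQ Gg' c'01 hQ by blast
      moreover have "Q ! nat \<lfloor>c' * real (length Q - 1)\<rfloor> = w i"
      proof -
        have lQ: "length Q - 1 = n" unfolding Q_def by simp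
        have "nat \<lfloor>c' * real (length Q - 1)\<rfloor> = n - i" unfolding lQ c'n by simp
        moreover have "Q ! (n - i) = w i" unfolding Q_def using n
          by (simp add: rev_nth del: upt_Suc)
        ultimately show ?thesis by simp
      qed
      moreover have "rev \<gamma> ! nat \<lfloor>c' * real (length (rev \<gamma>) - 1)\<rfloor> = \<gamma> ! (m - j')"
        using s1 lg unfolding j'_def m_def by (simp add: rev_nth)
      moreover have "last Q = w 0" unfolding Q_def by (simp add: last_rev hd_map upt_conv_Cons del: upt_Suc)
      moreover have "last (rev \<gamma>) = v 0" using g by (simp add: last_rev)
      ultimately show ?thesis by simp
    qed
    have h3: "cdist X (\<gamma> ! j) (\<gamma> ! (m - j')) \<le> 1"
      using geo s1 s2 lg unfolding geodesic_def by auto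
    have gj: "\<gamma> ! j \<in> verts X" "\<gamma> ! (m - j') \<in> verts X" using gv s1 by auto
    have "cdist X (v i) (w i) \<le> cdist X (v i) (\<gamma> ! j) + cdist X (\<gamma> ! j) (w i)"
      by (rule cdist_tri[OF assms(1) vv gj(1) wv])
    also have "cdist X (\<gamma> ! j) (w i) \<le> cdist X (\<gamma> ! j) (\<gamma> ! (m - j')) + cdist X (\<gamma> ! (m - j')) (w i)"
      by (rule cdist_tri[OF assms(1) gj(1) gj(2) wv])
    finally have tri: "real (cdist X (v i) (w i)) \<le> real (cdist X (v i) (\<gamma> ! j)) + 1 + real (cdist X (w i) (\<gamma> ! (m - j')))"
      using h3 cdist_sym[of X "\<gamma> ! (m - j')" "w i"] by linarith
    have "c * real (cdist X (v n) (w n)) \<le> c * K" using K(2) c01 by (simp add: mult_left_mono)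
    moreover have "c * K = real i * K / real n" unfolding c_def by simp
    moreover have "c' * real (cdist X (w 0) (v 0)) \<le> real a"
      using c'01 cdist_sym[of X "w 0" "v 0"] unfolding a_def by (simp add: mult_left_le_one_le)
    ultimately show ?thesis using tri h1 h2 unfolding B_def by linarith
  qed
  show "real (cdist X (v i) (w i)) \<le> real (cdist X (v 0) (w 0)) + 2 * D + 1"
  proof (rule ccontr)
    assume "\<not> ?thesis"
    then have e: "real (cdist X (v i) (w i)) - B > 0" unfolding B_def a_def by linarith
    define e where "e = real (cdist X (v i) (w i)) - B"
    define n where "n = nat \<lceil>real i * K / e\<rceil> + i + 1"
    have n1: "i \<le> n" "1 \<le> n" unfolding n_def by auto
    have "real i * K / e < real n" unfolding n_def by linarith
    then have "real i * K < real n * e" using e unfolding e_def by (simp add: pos_divide_less_eq)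
    then have "real i * K / real n < e" using n1 by (simp add: divide_less_eq mult.commute)
    then show False using claim[OF n1] unfolding e_def by linarith
  qed
qed

end
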